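(* Let $A$ and $B$ be dendroidally ordered sets, let $y$ be a leaf of $A$, and form the grafting $A\circ B$, i.e. the pushout in $\mathbf{bPos}$ of $A\leftarrow\star\rightarrow B$ where $\star\to A$ picks $y$ and $\star\to B$ picks the root of $B$. Then $A\circ B$ is again a dendroidally ordered set, and it is also a pushout of the same diagram in the full subcategory $\Omega\subseteq\mathbf{bPos}$ of dendroidally ordered sets.
   Context: $A^*$ denotes the free monoid (non-commutative setting) or free commutative monoid (commutative setting) on $A$. A broad poset: $R\subseteq A^*\times A$ (written $\le$) with reflexivity, transitivity (if $a_1\cdots a_n\le a$ and $b_i\le a_i$, $b_i\in A^*$, then $b_1\cdots b_n\le a$), antisymmetry on $A$; monotone maps: $b\le a\Rightarrow f(b)\le f(a)$. $\star$ is the singleton broad poset with only the relation $*\le *$; monotone maps $\star\to A$ correspond to elements of $A$. Extended order on $A^*$: $a\le b$ iff $b=b_1\cdots b_n$ ($b_i\in A$), $a=a_1\cdots a_n$ with $a_i\le b_i$. Descendant: $b\le_d a$ iff some $b'\in A^*$ with $b'\le a$ contains $b$. $\hat a=\{b\in A^*:b<a\}$; $a$ is a leaf if $\hat a=\emptyset$; $a$ has children if $\hat a$ has a maximum $a^\uparrow$ (elements of $a^\uparrow$ are children). A dendroidally ordered set is a broad poset with finitely many relations that is simple ($a_1\cdots a_n\le a$ implies the $a_i$ are pairwise distinct), has a root (an element of which every element is a descendant), and in which every non-leaf has children. $\Omega$ is the full subcategory of $\mathbf{bPos}$ on dendroidally ordered sets. Explicitly, assuming $A\cap B=\{y\}$,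 $A\circ B$ is the set $A\cup B$ where $z\le x$ iff it holds in $A$ or in $B$, or $z=a_1ba_2$ with $a_1,a_2\in A^*$, $b\in B^*$, $b\le y$ in $B$ and $a_1ya_2\le x$ in $A$. *)

theory Defs
  imports Main "HOL-Library.Multiset"
begin

section \<open>Non-commutative (planar) setting: A* = lists over A\<close>

text \<open>A broad poset is a carrier S together with a relation R between words (lists)
  over S and elements of S; (bs, a) in R means bs \<le> a.\<close>

definition bposet_nc :: "'a set \<Rightarrow> ('a list \<times> 'a) set \<Rightarrow> bool" where
  "bposet_nc S R \<longleftrightarrow>
     R \<subseteq> lists S \<times> S
   \<and> (\<forall>a\<in>S. ([a], a) \<in> R)
   \<and> (\<forall>as a bss. (as, a) \<in> R \<and> length bss = length as
        \<and> (\<forall>i<length as. (bss ! i, as ! i) \<in> R) \<longrightarrow> (concat bss, a) \<in> R)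
   \<and> (\<forall>a b. ([a], b) \<in> R \<and> ([b], a) \<in> R \<longrightarrow> a = b)"

definition mono_nc :: "'a set \<Rightarrow> ('a list \<times> 'a) set \<Rightarrow> 'b set \<Rightarrow> ('b list \<times> 'b) set
    \<Rightarrow> ('a \<Rightarrow> 'b) \<Rightarrow> bool" where
  "mono_nc S R S' R' f \<longleftrightarrow>
     (\<forall>a\<in>S. f a \<in> S') \<and> (\<forall>bs a. (bs, a) \<in> R \<longrightarrow> (map f bs, f a) \<in> R')"

definition ext_le_nc :: "('a list \<times> 'a) set \<Rightarrow> 'a list \<Rightarrow> 'a list \<Rightarrow> bool" where
  "ext_le_nc R as bs \<longleftrightarrow>
     (\<exists>ass. length ass = length bs \<and> as = concat ass
        \<and> (\<forall>i<length bs. (ass ! i, bs ! i) \<in> R))"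

definition hat_nc :: "('a list \<times> 'a) set \<Rightarrow> 'a \<Rightarrow> 'a list set" where
  "hat_nc R a = {b. (b, a) \<in> R \<and> b \<noteq> [a]}"

definition leaf_nc :: "('a list \<times> 'a) set \<Rightarrow> 'a \<Rightarrow> bool" where
  "leaf_nc R a \<longleftrightarrow> hat_nc R a = {}"

definition has_children_nc :: "('a list \<times> 'a) set \<Rightarrow> 'a \<Rightarrow> bool" where
  "has_children_nc R a \<longleftrightarrow>
     (\<exists>m\<in>hat_nc R a. \<forall>b\<in>hat_nc R a. ext_le_nc R b m)"

definition descendant_nc :: "('a list \<times> 'a) set \<Rightarrow> 'a \<Rightarrow> 'a \<Rightarrow> bool" where
  "descendant_nc R b a \<longleftrightarrow> (\<exists>b'. (b', a) \<in> R \<and> b \<in> set b')"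

definition is_root_nc :: "'a set \<Rightarrow> ('a list \<times> 'a) set \<Rightarrow> 'a \<Rightarrow> bool" where
  "is_root_nc S R r \<longleftrightarrow> r \<in> S \<and> (\<forall>a\<in>S. descendant_nc R a r)"

definition simple_nc :: "('a list \<times> 'a) set \<Rightarrow> bool" where
  "simple_nc R \<longleftrightarrow> (\<forall>as a. (as, a) \<in> R \<longrightarrow> distinct as)"

definition dendroidal_nc :: "'a set \<Rightarrow> ('a list \<times> 'a) set \<Rightarrow> bool" where
  "dendroidal_nc S R \<longleftrightarrow>
     bposet_nc S R \<and> finite R \<and> simple_nc R \<and> (\<exists>r. is_root_nc S R r)
   \<and> (\<forall>a\<in>S. \<not> leaf_nc R a \<longrightarrow> has_children_nc R a)"

text \<open>Grafting A \<circ> B along y (assuming A \<inter> B = {y}); carrier is A \<union> B.\<close>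
definition graft_nc :: "('a list \<times> 'a) set \<Rightarrow> ('a list \<times> 'a) set \<Rightarrow> 'a
    \<Rightarrow> ('a list \<times> 'a) set" where
  "graft_nc RA RB y = RA \<union> RB \<union>
     {(a1 @ b @ a2, x) | a1 b a2 x. (b, y) \<in> RB \<and> (a1 @ [y] @ a2, x) \<in> RA}"

section \<open>Commutative setting: A* = finite multisets over A\<close>

definition bposet_c :: "'a set \<Rightarrow> ('a multiset \<times> 'a) set \<Rightarrow> bool" where
  "bposet_c S R \<longleftrightarrow>
     (\<forall>m a. (m, a) \<in> R \<longrightarrow> set_mset m \<subseteq> S \<and> a \<in> S)
   \<and> (\<forall>a\<in>S. ({#a#}, a) \<in> R)
   \<and> (\<forall>as a bss. (mset as, a) \<in> R \<and> length bss = length as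
        \<and> (\<forall>i<length as. (bss ! i, as ! i) \<in> R) \<longrightarrow> (sum_list bss, a) \<in> R)
   \<and> (\<forall>a b. ({#a#}, b) \<in> R \<and> ({#b#}, a) \<in> R \<longrightarrow> a = b)"

definition mono_c :: "'a set \<Rightarrow> ('a multiset \<times> 'a) set \<Rightarrow> 'b set \<Rightarrow> ('b multiset \<times> 'b) set
    \<Rightarrow> ('a \<Rightarrow> 'b) \<Rightarrow> bool" where
  "mono_c S R S' R' f \<longleftrightarrow>
     (\<forall>a\<in>S. f a \<in> S') \<and> (\<forall>m a. (m, a) \<in> R \<longrightarrow> (image_mset f m, f a) \<in> R')"

definition ext_le_c :: "('a multiset \<times> 'a) set \<Rightarrow> 'a multiset \<Rightarrow> 'a multiset \<Rightarrow> bool" where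
  "ext_le_c R m n \<longleftrightarrow>
     (\<exists>bs ms. mset bs = n \<and> length ms = length bs \<and> m = sum_list ms
        \<and> (\<forall>i<length bs. (ms ! i, bs ! i) \<in> R))"

definition hat_c :: "('a multiset \<times> 'a) set \<Rightarrow> 'a \<Rightarrow> 'a multiset set" where
  "hat_c R a = {b. (b, a) \<in> R \<and> b \<noteq> {#a#}}"

definition leaf_c :: "('a multiset \<times> 'a) set \<Rightarrow> 'a \<Rightarrow> bool" where
  "leaf_c R a \<longleftrightarrow> hat_c R a = {}"

definition has_children_c :: "('a multiset \<times> 'a) set \<Rightarrow> 'a \<Rightarrow> bool" where
  "has_children_c R a \<longleftrightarrow>
     (\<exists>m\<in>hat_c R a. \<forall>b\<in>hat_c R a. ext_le_c R b m)"

definition descendant_c :: "('a multiset \<times> 'a) set \<Rightarrow> 'a \<Rightarrow> 'a \<Rightarrow> bool" where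
  "descendant_c R b a \<longleftrightarrow> (\<exists>b'. (b', a) \<in> R \<and> b \<in># b')"

definition is_root_c :: "'a set \<Rightarrow> ('a multiset \<times> 'a) set \<Rightarrow> 'a \<Rightarrow> bool" where
  "is_root_c S R r \<longleftrightarrow> r \<in> S \<and> (\<forall>a\<in>S. descendant_c R a r)"

definition simple_c :: "('a multiset \<times> 'a) set \<Rightarrow> bool" where
  "simple_c R \<longleftrightarrow> (\<forall>m a x. (m, a) \<in> R \<longrightarrow> count m x \<le> 1)"

definition dendroidal_c :: "'a set \<Rightarrow> ('a multiset \<times> 'a) set \<Rightarrow> bool" where
  "dendroidal_c S R \<longleftrightarrow>
     bposet_c S R \<and> finite R \<and> simple_c R \<and> (\<exists>r. is_root_c S R r)
   \<and> (\<forall>a\<in>S. \<not> leaf_c R a \<longrightarrow> has_children_c R a)"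

definition graft_c :: "('a multiset \<times> 'a) set \<Rightarrow> ('a multiset \<times> 'a) set \<Rightarrow> 'a
    \<Rightarrow> ('a multiset \<times> 'a) set" where
  "graft_c RA RB y = RA \<union> RB \<union>
     {(a + b, x) | a b x. (b, y) \<in> RB \<and> (a + {#y#}, x) \<in> RA}"

end

theory Submission
  imports Defs
begin


lemma split_uniq: "distinct (p@[u]@q) \<Longrightarrow> p@[u]@q = p'@[u]@q' \<Longrightarrow> p=p' \<and> q=q'"
  by (simp add: append_Cons_eq_iff)

lemma bp_nc_sub:
  assumes bp: "bposet_nc S R" and h1: "(p@[u]@q, x) \<in> R" and h2: "(v,u) \<in> R"
  shows "(p@v@q, x) \<in> R"
proof -
  have sub: "R \<subseteq> lists S \<times> S" and refl: "\<forall>a\<in>S. ([a],a)\<in>R"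
    and tr: "\<forall>as a bss. (as, a) \<in> R \<and> length bss = length as
        \<and> (\<forall>i<length as. (bss ! i, as ! i) \<in> R) \<longrightarrow> (concat bss, a) \<in> R"
    using bp unfolding bposet_nc_def by blast+
  have pS: "set p \<subseteq> S" and qS: "set q \<subseteq> S" using h1 sub by auto
  define bss where "bss = map (\<lambda>z. [z]) p @ [v] @ map (\<lambda>z. [z]) q"
  have "\<forall>i<length (p@[u]@q). (bss ! i, (p@[u]@q) ! i) \<in> R"
  proof (intro allI impI)
    fix i assume i: "i < length (p@[u]@q)"
    consider "i < length p" | "i = length p" | "i > length p" by linarith
    then show "(bss ! i, (p@[u]@q) ! i) \<in> R"
    proof cases
      case 1
      then have "p!i \<in> S" using pS nth_mem by blast
      then show ?thesis using 1 refl by (auto simp: bss_def nth_append)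
    next
      case 2 then show ?thesis using h2 by (auto simp: bss_def nth_append)
    next
      case 3
      define k where "k = i - Suc (length p)"
      have k: "i = length p + Suc k" using 3 by (simp add: k_def)
      with i have kq: "k < length q" by simp
      then have "q!k \<in> S" using qS nth_mem by blast
      then show ?thesis using kq refl k by (auto simp: bss_def nth_append)
    qed
  qed
  moreover have "length bss = length (p@[u]@q)" by (simp add: bss_def)
  moreover have "concat bss = p@v@q" by (simp add: bss_def concat_map_singleton)
  ultimately show ?thesis using tr[rule_format, of "p@[u]@q" x bss] h1 by simp
qed

lemma trans_from_sub_nc:
  assumes sub: "\<And>p u q x v. (p@[u]@q, x) \<in> R \<Longrightarrow> (v,u) \<in> R \<Longrightarrow> (p@v@q, x) \<in> R"
    and h: "(as, a) \<in> R" "length bss = length as" "\<forall>i<length as. (bss ! i, as ! i) \<in> R"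
  shows "(concat bss, a) \<in> R"
proof -
  have "\<forall>k\<le>length as. (concat (take k bss) @ drop k as, a) \<in> R"
  proof (intro allI impI)
    fix k show "k \<le> length as \<Longrightarrow> (concat (take k bss) @ drop k as, a) \<in> R"
    proof (induction k)
      case 0 then show ?case using h by simp
    next
      case (Suc k)
      then have k: "k < length as" by simp
      have e1: "drop k as = as!k # drop (Suc k) as" using k by (simp add: Cons_nth_drop_Suc)
      have e2: "take (Suc k) bss = take k bss @ [bss!k]" using k h(2) by (simp add: take_Suc_conv_app_nth)
      have "(concat (take k bss) @ [as!k] @ drop (Suc k) as, a) \<in> R" using Suc e1 by simp
      from sub[OF this] h(3) k have "(concat (take k bss) @ bss!k @ drop (Suc k) as, a) \<in> R" by blast
      then show ?case using e2 by simp
    qed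
  qed
  from this[rule_format, of "length as"] show ?thesis using h(2) by simp
qed

lemma simple_self_nc:
  assumes bp: "bposet_nc S R" and sp: "simple_nc R" and h: "(p@[b]@q, b) \<in> R"
  shows "p = [] \<and> q = []"
proof -
  have "(p@(p@[b]@q)@q, b) \<in> R" using bp_nc_sub[OF bp h h] .
  then have "distinct (p@(p@[b]@q)@q)" using sp unfolding simple_nc_def by blast
  then show ?thesis by auto
qed

lemma ext_le_mono_nc: "R \<subseteq> R' \<Longrightarrow> ext_le_nc R b m \<Longrightarrow> ext_le_nc R' b m"
  unfolding ext_le_nc_def by blast

context
  fixes SA :: "'a set" and RA SB RB y
  assumes dA: "dendroidal_nc SA RA" and dB: "dendroidal_nc SB RB"
    and int: "SA \<inter> SB = {y}" and lf: "leaf_nc RA y" and rt: "is_root_nc SB RB y"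
begin

lemma bpA: "bposet_nc SA RA" using dA dendroidal_nc_def by blast
lemma bpB: "bposet_nc SB RB" using dB dendroidal_nc_def by blast
lemma spA: "simple_nc RA" using dA dendroidal_nc_def by blast
lemma spB: "simple_nc RB" using dB dendroidal_nc_def by blast
lemma RA_S: "(z,x)\<in>RA \<Longrightarrow> set z \<subseteq> SA \<and> x \<in> SA" using bpA unfolding bposet_nc_def by blast
lemma RB_S: "(z,x)\<in>RB \<Longrightarrow> set z \<subseteq> SB \<and> x \<in> SB" using bpB unfolding bposet_nc_def by blast
lemma reflA: "a \<in> SA \<Longrightarrow> ([a],a) \<in> RA" using bpA unfolding bposet_nc_def by blast
lemma reflB: "a \<in> SB \<Longrightarrow> ([a],a) \<in> RB" using bpB unfolding bposet_nc_def by blast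
lemma distA: "(z,x)\<in>RA \<Longrightarrow> distinct z" using spA unfolding simple_nc_def by blast
lemma distB: "(z,x)\<in>RB \<Longrightarrow> distinct z" using spB unfolding simple_nc_def by blast
lemma yA: "y \<in> SA" using int by blast
lemma yB: "y \<in> SB" using int by blast
lemma leafy: "(z,y)\<in>RA \<Longrightarrow> z = [y]" using lf unfolding leaf_nc_def hat_nc_def by blast

abbreviation "G \<equiv> graft_nc RA RB y"

lemma Gc: "(c,y)\<in>RB \<Longrightarrow> (a1@[y]@a2,x)\<in>RA \<Longrightarrow> (a1@c@a2,x)\<in>G"
  unfolding graft_nc_def by blast
lemma GA: "(z,x)\<in>RA \<Longrightarrow> (z,x)\<in>G" unfolding graft_nc_def by blast
lemma GB: "(z,x)\<in>RB \<Longrightarrow> (z,x)\<in>G" unfolding graft_nc_def by blast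

lemma G_cases: "(z,x)\<in>G \<Longrightarrow> (z,x)\<in>RA \<or> (z,x)\<in>RB \<or>
   (\<exists>a1 c a2. z = a1@c@a2 \<and> (c,y)\<in>RB \<and> (a1@[y]@a2,x)\<in>RA)"
  unfolding graft_nc_def by blast

lemma G_SB: assumes "(z,a)\<in>G" "a\<in>SB" shows "(z,a)\<in>RB"
proof -
  have "(z,a)\<in>RA \<Longrightarrow> (z,a)\<in>RB"
  proof -
    assume h: "(z,a)\<in>RA"
    then have "a \<in> SA" using RA_S by blast
    then have "a = y" using int assms(2) by blast
    then have "z = [y]" using leafy h by blast
    then show "(z,a)\<in>RB" using reflB[OF yB] \<open>a = y\<close> by simp
  qed
  moreover have "\<And>a1 c a2. z = a1@c@a2 \<Longrightarrow> (c,y)\<in>RB \<Longrightarrow> (a1@[y]@a2,a)\<in>RA \<Longrightarrow> (z,a)\<in>RB"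
  proof -
    fix a1 c a2 assume h: "z = a1@c@a2" "(c,y)\<in>RB" "(a1@[y]@a2,a)\<in>RA"
    then have "a \<in> SA" using RA_S by blast
    then have "a = y" using int assms(2) by blast
    then have "a1@[y]@a2 = [y]" using leafy h(3) by blast
    then have "a1 = [] \<and> a2 = []" by (cases a1) auto
    then show "(z,a)\<in>RB" using h by (simp add: \<open>a = y\<close>)
  qed
  ultimately show "(z,a)\<in>RB" using G_cases[OF assms(1)] by blast
qed

lemma G_SA: assumes "(z,a)\<in>G" "a\<notin>SB"
  shows "(z,a)\<in>RA \<or> (\<exists>a1 c a2. z = a1@c@a2 \<and> (c,y)\<in>RB \<and> (a1@[y]@a2,a)\<in>RA)"
proof -
  have "(z,a)\<notin>RB" using RB_S assms(2) by blast
  then show ?thesis using G_cases[OF assms(1)] by blast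
qed

lemma G_S: assumes "(z,x)\<in>G" shows "set z \<subseteq> SA \<union> SB \<and> x \<in> SA \<union> SB"
proof -
  consider "(z,x)\<in>RA" | "(z,x)\<in>RB" | a1 c a2 where "z = a1@c@a2" "(c,y)\<in>RB" "(a1@[y]@a2,x)\<in>RA"
    using G_cases[OF assms] by blast
  then show ?thesis
  proof cases
    case 1 then show ?thesis using RA_S[OF 1] by blast
  next
    case 2 then show ?thesis using RB_S[OF 2] by blast
  next
    case 3 then show ?thesis using RB_S[OF 3(2)] RA_S[OF 3(3)] by auto
  qed
qed

lemma G_dist: "(z,x)\<in>G \<Longrightarrow> distinct z"
proof -
  assume "(z,x)\<in>G"
  moreover have "\<And>a1 c a2. (c,y)\<in>RB \<Longrightarrow> (a1@[y]@a2,x)\<in>RA \<Longrightarrow> distinct (a1@c@a2)"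
  proof -
    fix a1 c a2 assume h: "(c,y)\<in>RB" "(a1@[y]@a2,x)\<in>RA"
    have d1: "distinct (a1@[y]@a2)" using distA h(2) by blast
    have d2: "distinct c" using distB h(1) by blast
    have s1: "set a1 \<union> set a2 \<subseteq> SA - {y}" using RA_S[OF h(2)] d1 by auto
    have s2: "set c \<subseteq> SB" using RB_S[OF h(1)] by blast
    show "distinct (a1@c@a2)" using d1 d2 s1 s2 int by auto
  qed
  ultimately show "distinct z" using G_cases[of z x] distA distB by blast
qed

lemma G_subst: assumes h1: "(p@[u]@q,x)\<in>G" and h2: "(v,u)\<in>G" shows "(p@v@q,x)\<in>G"
proof -
  have D: "distinct (p@[u]@q)" using G_dist h1 by blast
  consider "(p@[u]@q,x)\<in>RB" | "(p@[u]@q,x)\<in>RA"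
    | a1 c a2 where "p@[u]@q = a1@c@a2" "(c,y)\<in>RB" "(a1@[y]@a2,x)\<in>RA"
    using G_cases[OF h1] by blast
  then show ?thesis
  proof cases
    case 1
    then have "u \<in> SB" using RB_S[OF 1] by auto
    then have "(v,u)\<in>RB" using G_SB h2 by blast
    then show ?thesis using bp_nc_sub[OF bpB 1] GB by blast
  next
    case 2
    then have uA: "u \<in> SA" using RA_S[OF 2] by auto
    show ?thesis
    proof (cases "u = y")
      case True
      then have "(v,y)\<in>RB" using G_SB h2 yB by blast
      then show ?thesis using Gc[of v p q x] 2 True by simp
    next
      case False
      then have uB: "u \<notin> SB" using uA int by blast
      consider "(v,u)\<in>RA" | b1 c b2 where "v = b1@c@b2" "(c,y)\<in>RB" "(b1@[y]@b2,u)\<in>RA"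
        using G_SA[OF h2 uB] by blast
      then show ?thesis
      proof cases
        case 1 then show ?thesis using bp_nc_sub[OF bpA 2] GA by blast
      next
        case (2 b1 c b2)
        have "(p@(b1@[y]@b2)@q,x)\<in>RA" using bp_nc_sub[OF bpA \<open>(p@[u]@q,x)\<in>RA\<close> 2(3)] .
        then have "((p@b1)@[y]@(b2@q),x)\<in>RA" by simp
        from Gc[OF 2(2) this] show ?thesis using 2(1) by simp
      qed
    qed
  next
    case (3 a1 c a2)
    note o = 3
    have dA1: "distinct (a1@[y]@a2)" using distA o(3) by blast
    have "u \<in> set (a1@c@a2)" unfolding o(1)[symmetric] by simp
    then have "u \<in> set a1 \<or> u \<in> set c \<or> u \<in> set a2" by simp
    then consider "u \<in> set c" | "u \<in> set a1" | "u \<in> set a2" by blast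
    then show ?thesis
    proof cases
      case 1
      then obtain c1 c2 where c: "c = c1@[u]@c2" using split_list by fastforce
      have "p@[u]@q = (a1@c1)@[u]@(c2@a2)" using o(1) c by simp
      then have pq: "p = a1@c1" "q = c2@a2" using split_uniq[OF D] by blast+
      have "u \<in> SB" using RB_S[OF o(2)] c by auto
      then have "(v,u)\<in>RB" using G_SB h2 by blast
      then have "(c1@v@c2,y)\<in>RB" using bp_nc_sub[OF bpB, of c1 u c2 y v] o(2) c by simp
      from Gc[OF this o(3)] show ?thesis using pq by simp
    next
      case 2
      then obtain r1 r2 where a: "a1 = r1@[u]@r2" using split_list by fastforce
      have "p@[u]@q = r1@[u]@(r2@c@a2)" using o(1) a by simp
      then have pq: "p = r1" "q = r2@c@a2" using split_uniq[OF D] by blast+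
      have uA: "u \<in> SA" using RA_S[OF o(3)] a by auto
      have "u \<noteq> y" using dA1 a by auto
      then have uB: "u \<notin> SB" using uA int by blast
      have e: "(r1@[u]@(r2@[y]@a2),x)\<in>RA" using o(3) a by simp
      consider "(v,u)\<in>RA" | b1 d b2 where "v = b1@d@b2" "(d,y)\<in>RB" "(b1@[y]@b2,u)\<in>RA"
        using G_SA[OF h2 uB] by blast
      then show ?thesis
      proof cases
        case 1
        have "(r1@v@(r2@[y]@a2),x)\<in>RA" using bp_nc_sub[OF bpA e 1] .
        then have "((r1@v@r2)@[y]@a2,x)\<in>RA" by simp
        from Gc[OF o(2) this] show ?thesis using pq by simp
      next
        case (2 b1 d b2)
        have "(r1@(b1@[y]@b2)@(r2@[y]@a2),x)\<in>RA" using bp_nc_sub[OF bpA e 2(3)] .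
        then have "distinct (r1@(b1@[y]@b2)@(r2@[y]@a2))" using distA by blast
        then show ?thesis by simp
      qed
    next
      case 3
      then obtain r1 r2 where a: "a2 = r1@[u]@r2" using split_list by fastforce
      have "p@[u]@q = (a1@c@r1)@[u]@r2" using o(1) a by simp
      then have pq: "p = a1@c@r1" "q = r2" using split_uniq[OF D] by blast+
      have uA: "u \<in> SA" using RA_S[OF o(3)] a by auto
      have "u \<noteq> y" using dA1 a by auto
      then have uB: "u \<notin> SB" using uA int by blast
      have e: "((a1@[y]@r1)@[u]@r2,x)\<in>RA" using o(3) a by simp
      consider "(v,u)\<in>RA" | b1 d b2 where "v = b1@d@b2" "(d,y)\<in>RB" "(b1@[y]@b2,u)\<in>RA"
        using G_SA[OF h2 uB] by blast
      then show ?thesis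
      proof cases
        case 1
        have "((a1@[y]@r1)@v@r2,x)\<in>RA" using bp_nc_sub[OF bpA e 1] .
        then have "(a1@[y]@(r1@v@r2),x)\<in>RA" by simp
        from Gc[OF o(2) this] show ?thesis using pq by simp
      next
        case (2 b1 d b2)
        have "((a1@[y]@r1)@(b1@[y]@b2)@r2,x)\<in>RA" using bp_nc_sub[OF bpA e 2(3)] .
        then have "distinct ((a1@[y]@r1)@(b1@[y]@b2)@r2)" using distA by blast
        then show ?thesis by simp
      qed
    qed
  qed
qed


lemma G_trans: "(as, a) \<in> G \<Longrightarrow> length bss = length as \<Longrightarrow>
   (\<forall>i<length as. (bss ! i, as ! i) \<in> G) \<Longrightarrow> (concat bss, a) \<in> G"
  by (rule trans_from_sub_nc[where R=G, OF G_subst])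

lemma cyc_A: assumes "(w1,b)\<in>RA" "a \<in> set w1" "(w2,a)\<in>RA" "b \<in> set w2" shows "a = b"
proof -
  obtain p1 q1 where w1: "w1 = p1@[a]@q1" using assms(2) split_list by fastforce
  obtain p2 q2 where w2: "w2 = p2@[b]@q2" using assms(4) split_list by fastforce
  have "(p1@w2@q1,b)\<in>RA" using bp_nc_sub[OF bpA] assms(1,3) w1 by blast
  then have "((p1@p2)@[b]@(q2@q1),b)\<in>RA" using w2 by simp
  then have "p1@p2 = [] \<and> q2@q1 = []" using simple_self_nc[OF bpA spA] by blast
  then have "w1 = [a]" "w2 = [b]" using w1 w2 by auto
  then show ?thesis using assms(1,3) bpA unfolding bposet_nc_def by blast
qed

lemma G_in_A: assumes "([a],b)\<in>G" "b \<notin> SB" "a \<notin> SB" shows "\<exists>w. (w,b)\<in>RA \<and> a \<in> set w"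
proof -
  consider "([a],b)\<in>RA" | a1 c a2 where "[a] = a1@c@a2" "(c,y)\<in>RB" "(a1@[y]@a2,b)\<in>RA"
    using G_SA[OF assms(1,2)] by blast
  then show ?thesis
  proof cases
    case 1 then show ?thesis by auto
  next
    case 2
    have "a \<in> set (a1@c@a2)" unfolding 2(1)[symmetric] by simp
    moreover have "a \<notin> set c" using RB_S[OF 2(2)] assms(3) by blast
    ultimately show ?thesis using 2(3) by auto
  qed
qed

lemma G_antisym: assumes "([a],b)\<in>G" "([b],a)\<in>G" shows "a = b"
proof (cases "b \<in> SB")
  case True
  then have "([a],b)\<in>RB" using G_SB assms(1) by blast
  then have "a \<in> SB" using RB_S[OF \<open>([a],b)\<in>RB\<close>] by auto
  then have "([b],a)\<in>RB" using G_SB assms(2) by blast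
  then show ?thesis using \<open>([a],b)\<in>RB\<close> bpB unfolding bposet_nc_def by blast
next
  case False
  show ?thesis
  proof (cases "a \<in> SB")
    case True
    then have "([b],a)\<in>RB" using G_SB assms(2) by blast
    then have "b \<in> SB" using RB_S[OF \<open>([b],a)\<in>RB\<close>] by auto
    then show ?thesis using False by blast
  next
    case aB: False
    obtain w1 where "(w1,b)\<in>RA" "a \<in> set w1" using G_in_A[OF assms(1) False aB] by blast
    moreover obtain w2 where "(w2,a)\<in>RA" "b \<in> set w2" using G_in_A[OF assms(2) aB False] by blast
    ultimately show ?thesis using cyc_A by blast
  qed
qed

lemma G_bposet: "bposet_nc (SA \<union> SB) G"
  unfolding bposet_nc_def
proof (intro conjI)
  show "G \<subseteq> lists (SA \<union> SB) \<times> (SA \<union> SB)" using G_S by auto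
  show "\<forall>a\<in>SA \<union> SB. ([a], a) \<in> G" using reflA reflB GA GB by blast
  show "\<forall>as a bss. (as, a) \<in> G \<and> length bss = length as \<and> (\<forall>i<length as. (bss ! i, as ! i) \<in> G)
      \<longrightarrow> (concat bss, a) \<in> G" using G_trans by blast
  show "\<forall>a b. ([a], b) \<in> G \<and> ([b], a) \<in> G \<longrightarrow> a = b" using G_antisym by blast
qed

lemma G_finite: "finite G"
proof -
  have fA: "finite RA" using dA dendroidal_nc_def by blast
  have fB: "finite RB" using dB dendroidal_nc_def by blast
  let ?C = "\<Union>cp\<in>RB. \<Union>wx\<in>RA. (\<lambda>i. (take i (fst wx) @ fst cp @ drop (Suc i) (fst wx), snd wx)) ` {..<length (fst wx)}"
  have "finite ?C" using fA fB by auto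
  moreover have "G \<subseteq> RA \<union> RB \<union> ?C"
  proof
    fix zx assume "zx \<in> G"
    then consider "zx \<in> RA" | "zx \<in> RB" | a1 c a2 x where "zx = (a1@c@a2,x)" "(c,y)\<in>RB" "(a1@[y]@a2,x)\<in>RA"
      unfolding graft_nc_def by blast
    then show "zx \<in> RA \<union> RB \<union> ?C"
    proof cases
      case 3
      have "zx = (take (length a1) (a1@[y]@a2) @ c @ drop (Suc (length a1)) (a1@[y]@a2), x)"
        using 3(1) by simp
      then have "zx \<in> (\<lambda>i. (take i (fst (a1@[y]@a2,x)) @ fst (c,y) @ drop (Suc i) (fst (a1@[y]@a2,x)), snd (a1@[y]@a2,x))) ` {..<length (fst (a1@[y]@a2,x))}"
        by (intro image_eqI[where x="length a1"]) auto
      then show ?thesis using 3(2,3) by blast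
    qed auto
  qed
  moreover have "finite (RA \<union> RB \<union> ?C)" using fA fB \<open>finite ?C\<close> by blast
  ultimately show ?thesis using finite_subset by blast
qed

lemma G_root: "\<exists>r. is_root_nc (SA \<union> SB) G r"
proof -
  have "\<exists>r. is_root_nc SA RA r" using dA unfolding dendroidal_nc_def by blast
  then obtain r where r: "is_root_nc SA RA r" by blast
  have "is_root_nc (SA \<union> SB) G r"
    unfolding is_root_nc_def
  proof (intro conjI ballI)
    show "r \<in> SA \<union> SB" using r unfolding is_root_nc_def by blast
    fix a assume "a \<in> SA \<union> SB"
    then consider "a \<in> SA" | "a \<in> SB" by blast
    then show "descendant_nc G a r"
    proof cases
      case 1
      then obtain b' where "(b',r)\<in>RA" "a \<in> set b'" using r unfolding is_root_nc_def descendant_nc_def by blast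
      then show ?thesis using GA unfolding descendant_nc_def by blast
    next
      case 2
      then obtain b' where b': "(b',y)\<in>RB" "a \<in> set b'" using rt unfolding is_root_nc_def descendant_nc_def by blast
      obtain w where w: "(w,r)\<in>RA" "y \<in> set w" using r yA unfolding is_root_nc_def descendant_nc_def by blast
      obtain a1 a2 where wa: "w = a1@[y]@a2" using w(2) split_list by fastforce
      have "(a1@[y]@a2,r)\<in>RA" using w(1) wa by simp
      then have "(a1@b'@a2,r)\<in>G" by (rule Gc[OF b'(1)])
      moreover have "a \<in> set (a1@b'@a2)" using b'(2) by simp
      ultimately show ?thesis unfolding descendant_nc_def by blast
    qed
  qed
  then show ?thesis by blast
qed

lemma G_simple: "simple_nc G" unfolding simple_nc_def using G_dist by blast

lemma hatB: "a \<in> SB \<Longrightarrow> hat_nc G a = hat_nc RB a"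
  unfolding hat_nc_def using G_SB GB by blast

lemma G_children: assumes "a \<in> SA \<union> SB" "\<not> leaf_nc G a" shows "has_children_nc G a"
proof (cases "a \<in> SB")
  case True
  then have "\<not> leaf_nc RB a" using assms(2) hatB unfolding leaf_nc_def by simp
  then have "has_children_nc RB a" using dB True unfolding dendroidal_nc_def by blast
  then obtain m where m: "m \<in> hat_nc RB a" "\<forall>b\<in>hat_nc RB a. ext_le_nc RB b m"
    unfolding has_children_nc_def by blast
  have sub: "RB \<subseteq> G" using GB by auto
  show ?thesis unfolding has_children_nc_def hatB[OF True]
    using m ext_le_mono_nc[OF sub] by blast
next
  case False
  then have aA: "a \<in> SA" "a \<noteq> y" using assms(1) yB by auto
  obtain z where z: "(z,a)\<in>G" "z \<noteq> [a]" using assms(2) unfolding leaf_nc_def hat_nc_def by blast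
  have "\<not> leaf_nc RA a"
  proof -
    consider "(z,a)\<in>RA" | a1 c a2 where "z = a1@c@a2" "(c,y)\<in>RB" "(a1@[y]@a2,a)\<in>RA"
      using G_SA[OF z(1) False] by blast
    then show ?thesis
    proof cases
      case 1 then show ?thesis using z(2) unfolding leaf_nc_def hat_nc_def by blast
    next
      case 2
      have "a1@[y]@a2 \<noteq> [a]" using aA(2) by (cases a1) auto
      then show ?thesis using 2(3) unfolding leaf_nc_def hat_nc_def by blast
    qed
  qed
  then have "has_children_nc RA a" using dA aA(1) unfolding dendroidal_nc_def by blast
  then obtain m where m: "m \<in> hat_nc RA a" "\<forall>b\<in>hat_nc RA a. ext_le_nc RA b m"
    unfolding has_children_nc_def by blast
  have "m \<in> hat_nc G a" using m(1) GA unfolding hat_nc_def by blast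
  moreover have "\<forall>b\<in>hat_nc G a. ext_le_nc G b m"
  proof
    fix b assume b: "b \<in> hat_nc G a"
    consider "(b,a)\<in>RA" | a1 c a2 where "b = a1@c@a2" "(c,y)\<in>RB" "(a1@[y]@a2,a)\<in>RA"
      using G_SA[OF _ False, of b] b unfolding hat_nc_def by blast
    then show "ext_le_nc G b m"
    proof cases
      case 1
      then have "b \<in> hat_nc RA a" using b unfolding hat_nc_def by blast
      have sub: "RA \<subseteq> G" using GA by auto
      then show ?thesis using m(2) ext_le_mono_nc[OF sub] \<open>b \<in> hat_nc RA a\<close> by blast
    next
      case 2
      have "a1@[y]@a2 \<noteq> [a]" using aA(2) by (cases a1) auto
      then have "a1@[y]@a2 \<in> hat_nc RA a" using 2(3) unfolding hat_nc_def by blast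
      then have "ext_le_nc RA (a1@[y]@a2) m" using m(2) by blast
      then obtain ass where ass: "length ass = length m" "a1@[y]@a2 = concat ass"
          "\<forall>i<length m. (ass ! i, m ! i) \<in> RA"
        unfolding ext_le_nc_def by blast
      have D: "distinct (a1@[y]@a2)" using distA 2(3) by blast
      have "y \<in> set (concat ass)" unfolding ass(2)[symmetric] by simp
      then obtain xs where xs: "xs \<in> set ass" "y \<in> set xs" by auto
      then obtain j where j0: "j < length ass" "ass!j = xs" by (auto simp: in_set_conv_nth)
      then have j: "j < length ass" "y \<in> set (ass!j)" using xs(2) by auto
      obtain p q where pq: "ass!j = p@[y]@q" using j(2) split_list by fastforce
      have ce: "concat ass = concat (take j ass) @ ass!j @ concat (drop (Suc j) ass)"
        using arg_cong[OF id_take_nth_drop[OF j(1)], of concat] by simp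
      have "a1@[y]@a2 = (concat (take j ass) @ p)@[y]@(q @ concat (drop (Suc j) ass))"
        using ce pq ass(2) by simp
      then have e: "a1 = concat (take j ass) @ p" "a2 = q @ concat (drop (Suc j) ass)"
        using split_uniq[OF D] by blast+
      define ass' where "ass' = ass[j := p@c@q]"
      have l': "length ass' = length m" using ass(1) by (simp add: ass'_def)
      have c': "concat ass' = a1@c@a2"
        using j(1) e by (simp add: ass'_def upd_conv_take_nth_drop)
      have "\<forall>i<length m. (ass' ! i, m ! i) \<in> G"
      proof (intro allI impI)
        fix i assume i: "i < length m"
        show "(ass' ! i, m ! i) \<in> G"
        proof (cases "i = j")
          case True
          have "(ass!j, m!j) \<in> RA" using ass(3) j(1) ass(1) by simp
          then have "(p@[y]@q, m!j) \<in> RA" using pq by simp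
          then have "(p@c@q, m!j) \<in> G" by (rule Gc[OF 2(2)])
          then show ?thesis using True j(1) by (simp add: ass'_def)
        next
          case False
          then show ?thesis using ass(3) i GA by (simp add: ass'_def)
        qed
      qed
      then show ?thesis unfolding ext_le_nc_def 2(1)
        by (intro exI[of _ ass'] conjI l' c'[symmetric]) (simp add: l')
    qed
  qed
  ultimately show ?thesis unfolding has_children_nc_def by blast
qed

lemma G_dendroidal: "dendroidal_nc (SA \<union> SB) G"
  unfolding dendroidal_nc_def
  by (intro conjI G_bposet G_finite G_simple G_root ballI impI G_children)

lemma G_univ:
  assumes dC: "dendroidal_nc SC RC" and mf: "mono_nc SA RA SC RC f" and mg: "mono_nc SB RB SC RC g"
    and fg: "f y = g y"
  shows "\<exists>h. mono_nc (SA \<union> SB) G SC RC h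
                  \<and> (\<forall>a\<in>SA. h a = f a) \<and> (\<forall>b\<in>SB. h b = g b)
                  \<and> (\<forall>h'. mono_nc (SA \<union> SB) G SC RC h'
                          \<and> (\<forall>a\<in>SA. h' a = f a) \<and> (\<forall>b\<in>SB. h' b = g b)
                          \<longrightarrow> (\<forall>x\<in>SA \<union> SB. h' x = h x))"
proof -
  define h where "h = (\<lambda>x. if x \<in> SA then f x else g x)"
  have hA: "\<forall>a\<in>SA. h a = f a" by (simp add: h_def)
  have hB: "\<forall>b\<in>SB. h b = g b" using int fg by (auto simp: h_def)
  have bpC: "bposet_nc SC RC" using dC dendroidal_nc_def by blast
  have "mono_nc (SA \<union> SB) G SC RC h"
    unfolding mono_nc_def
  proof (intro conjI allI impI ballI)
    fix a assume "a \<in> SA \<union> SB" then show "h a \<in> SC" using mf mg hA hB unfolding mono_nc_def by auto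
  next
    fix bs a assume "(bs,a)\<in>G"
    then consider "(bs,a)\<in>RA" | "(bs,a)\<in>RB" | a1 c a2 where "bs = a1@c@a2" "(c,y)\<in>RB" "(a1@[y]@a2,a)\<in>RA"
      using G_cases by blast
    then show "(map h bs, h a) \<in> RC"
    proof cases
      case 1
      have e: "map h bs = map f bs" "h a = f a" using RA_S[OF 1] hA by (auto simp: map_eq_conv)
      have "(map f bs, f a) \<in> RC" using mf 1 unfolding mono_nc_def by blast
      then show ?thesis by (simp only: e)
    next
      case 2
      have e: "map h bs = map g bs" "h a = g a" using RB_S[OF 2] hB by (auto simp: map_eq_conv)
      have "(map g bs, g a) \<in> RC" using mg 2 unfolding mono_nc_def by blast
      then show ?thesis by (simp only: e)
    next
      case 3
      have e1: "map h a1 = map f a1" "map h a2 = map f a2" "h a = f a" using RA_S[OF 3(3)] hA by (auto simp: map_eq_conv)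
      have e2: "map h c = map g c" using RB_S[OF 3(2)] hB by (auto simp: map_eq_conv)
      have r1: "(map f a1 @ [f y] @ map f a2, f a) \<in> RC" using mf 3(3) unfolding mono_nc_def by fastforce
      have r2: "(map g c, f y) \<in> RC" using mg 3(2) fg unfolding mono_nc_def by fastforce
      have "(map f a1 @ map g c @ map f a2, f a) \<in> RC" using bp_nc_sub[OF bpC r1 r2] .
      then show ?thesis unfolding 3(1) map_append e1 e2 .
    qed
  qed
  moreover have "\<forall>h'. mono_nc (SA \<union> SB) G SC RC h'
                          \<and> (\<forall>a\<in>SA. h' a = f a) \<and> (\<forall>b\<in>SB. h' b = g b)
                          \<longrightarrow> (\<forall>x\<in>SA \<union> SB. h' x = h x)" using hA hB by auto
  ultimately show ?thesis using hA hB by blast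
qed

lemma mono_idA: "mono_nc SA RA (SA \<union> SB) G id" unfolding mono_nc_def using GA by auto
lemma mono_idB: "mono_nc SB RB (SA \<union> SB) G id" unfolding mono_nc_def using GB by auto

end

lemma part_nc:
  "(\<forall>(SA :: 'a set) RA SB RB y.
      dendroidal_nc SA RA \<and> dendroidal_nc SB RB \<and> SA \<inter> SB = {y}
      \<and> leaf_nc RA y \<and> is_root_nc SB RB y \<longrightarrow>
        dendroidal_nc (SA \<union> SB) (graft_nc RA RB y)
      \<and> mono_nc SA RA (SA \<union> SB) (graft_nc RA RB y) id
      \<and> mono_nc SB RB (SA \<union> SB) (graft_nc RA RB y) id
      \<and> (\<forall>(SC :: 'c set) RC f g.
           dendroidal_nc SC RC \<and> mono_nc SA RA SC RC f \<and> mono_nc SB RB SC RC g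
           \<and> f y = g y \<longrightarrow>
             (\<exists>h. mono_nc (SA \<union> SB) (graft_nc RA RB y) SC RC h
                  \<and> (\<forall>a\<in>SA. h a = f a) \<and> (\<forall>b\<in>SB. h b = g b)
                  \<and> (\<forall>h'. mono_nc (SA \<union> SB) (graft_nc RA RB y) SC RC h'
                          \<and> (\<forall>a\<in>SA. h' a = f a) \<and> (\<forall>b\<in>SB. h' b = g b)
                          \<longrightarrow> (\<forall>x\<in>SA \<union> SB. h' x = h x)))))"
proof (intro allI impI)
  fix SA :: "'a set" and RA SB RB y
  assume h: "dendroidal_nc SA RA \<and> dendroidal_nc SB RB \<and> SA \<inter> SB = {y}
      \<and> leaf_nc RA y \<and> is_root_nc SB RB y"
  then have h1: "dendroidal_nc SA RA" "dendroidal_nc SB RB" "SA \<inter> SB = {y}"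
      "leaf_nc RA y" "is_root_nc SB RB y" by auto
  show "dendroidal_nc (SA \<union> SB) (graft_nc RA RB y)
      \<and> mono_nc SA RA (SA \<union> SB) (graft_nc RA RB y) id
      \<and> mono_nc SB RB (SA \<union> SB) (graft_nc RA RB y) id
      \<and> (\<forall>(SC :: 'c set) RC f g.
           dendroidal_nc SC RC \<and> mono_nc SA RA SC RC f \<and> mono_nc SB RB SC RC g
           \<and> f y = g y \<longrightarrow>
             (\<exists>h. mono_nc (SA \<union> SB) (graft_nc RA RB y) SC RC h
                  \<and> (\<forall>a\<in>SA. h a = f a) \<and> (\<forall>b\<in>SB. h b = g b)
                  \<and> (\<forall>h'. mono_nc (SA \<union> SB) (graft_nc RA RB y) SC RC h'
                          \<and> (\<forall>a\<in>SA. h' a = f a) \<and> (\<forall>b\<in>SB. h' b = g b)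
                          \<longrightarrow> (\<forall>x\<in>SA \<union> SB. h' x = h x))))"
  proof (intro conjI allI impI)
    show "dendroidal_nc (SA \<union> SB) (graft_nc RA RB y)" by (rule G_dendroidal[OF h1])
    show "mono_nc SA RA (SA \<union> SB) (graft_nc RA RB y) id" by (rule mono_idA[OF h1])
    show "mono_nc SB RB (SA \<union> SB) (graft_nc RA RB y) id" by (rule mono_idB[OF h1])
    fix SC :: "'c set" and RC f g
    assume "dendroidal_nc SC RC \<and> mono_nc SA RA SC RC f \<and> mono_nc SB RB SC RC g \<and> f y = g y"
    then show "\<exists>h. mono_nc (SA \<union> SB) (graft_nc RA RB y) SC RC h
                  \<and> (\<forall>a\<in>SA. h a = f a) \<and> (\<forall>b\<in>SB. h b = g b)
                  \<and> (\<forall>h'. mono_nc (SA \<union> SB) (graft_nc RA RB y) SC RC h'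
                          \<and> (\<forall>a\<in>SA. h' a = f a) \<and> (\<forall>b\<in>SB. h' b = g b)
                          \<longrightarrow> (\<forall>x\<in>SA \<union> SB. h' x = h x))"
      using G_univ[OF h1] by blast
  qed
qed




lemma sum_list_singletons: "sum_list (map (\<lambda>z. {#z#}) l) = mset l"
  by (induction l) auto

lemma bp_c_sub:
  assumes bp: "bposet_c S R" and h1: "(p + {#u#}, x) \<in> R" and h2: "(v,u) \<in> R"
  shows "(p + v, x) \<in> R"
proof -
  have sub: "\<forall>m a. (m, a) \<in> R \<longrightarrow> set_mset m \<subseteq> S \<and> a \<in> S" and refl: "\<forall>a\<in>S. ({#a#},a)\<in>R"
    and tr: "\<forall>as a bss. (mset as, a) \<in> R \<and> length bss = length as
        \<and> (\<forall>i<length as. (bss ! i, as ! i) \<in> R) \<longrightarrow> (sum_list bss, a) \<in> R"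
    using bp unfolding bposet_c_def by blast+
  have "set_mset (p + {#u#}) \<subseteq> S" using sub h1 by blast
  then have pS: "set_mset p \<subseteq> S" by auto
  obtain l where l: "mset l = p" using ex_mset by blast
  define as where "as = u # l"
  define bss where "bss = v # map (\<lambda>z. {#z#}) l"
  have m: "(mset as, x) \<in> R" using h1 l by (simp add: as_def)
  have "\<forall>i<length as. (bss ! i, as ! i) \<in> R"
  proof (intro allI impI)
    fix i assume i: "i < length as"
    show "(bss ! i, as ! i) \<in> R"
    proof (cases i)
      case 0 then show ?thesis using h2 by (simp add: as_def bss_def)
    next
      case (Suc k)
      then have k: "k < length l" using i by (simp add: as_def)
      then have "l!k \<in> S" using pS l nth_mem by fastforce
      then show ?thesis using Suc k refl by (simp add: as_def bss_def)
    qed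
  qed
  moreover have "length bss = length as" by (simp add: bss_def as_def)
  moreover have "sum_list bss = p + v" using l by (simp add: bss_def sum_list_singletons add.commute)
  ultimately show ?thesis using tr[rule_format, of as x bss] m by simp
qed

lemma trans_from_sub_c:
  assumes sub: "\<And>p u x v. (p + {#u#}, x) \<in> R \<Longrightarrow> (v,u) \<in> R \<Longrightarrow> (p + v, x) \<in> R"
    and h: "(mset as, a) \<in> R" "length bss = length as" "\<forall>i<length as. (bss ! i, as ! i) \<in> R"
  shows "(sum_list bss, a) \<in> R"
proof -
  have "\<forall>k\<le>length as. (sum_list (take k bss) + mset (drop k as), a) \<in> R"
  proof (intro allI impI)
    fix k show "k \<le> length as \<Longrightarrow> (sum_list (take k bss) + mset (drop k as), a) \<in> R"
    proof (induction k)
      case 0 then show ?case using h by simp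
    next
      case (Suc k)
      then have k: "k < length as" by simp
      have e1: "drop k as = as!k # drop (Suc k) as" using k by (simp add: Cons_nth_drop_Suc)
      have e2: "take (Suc k) bss = take k bss @ [bss!k]" using k h(2) by (simp add: take_Suc_conv_app_nth)
      have "((sum_list (take k bss) + mset (drop (Suc k) as)) + {#as!k#}, a) \<in> R"
        using Suc e1 by (simp add: add.assoc)
      from sub[OF this] h(3) k have "((sum_list (take k bss) + mset (drop (Suc k) as)) + bss!k, a) \<in> R" by blast
      then show ?case using e2 by (simp add: ac_simps)
    qed
  qed
  from this[rule_format, of "length as"] show ?thesis using h(2) by simp
qed

lemma simple_self_c:
  assumes bp: "bposet_c S R" and sp: "simple_c R" and h: "(p + {#b#}, b) \<in> R"
  shows "p = {#}"
proof -
  have "(p + (p + {#b#}), b) \<in> R" using bp_c_sub[OF bp h h] .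
  then have "\<forall>x. count (p + (p + {#b#})) x \<le> 1" using sp unfolding simple_c_def by blast
  then have "\<forall>x. count p x = 0"
  proof (intro allI)
    fix x assume "\<forall>x. count (p + (p + {#b#})) x \<le> 1"
    then have "count (p + (p + {#b#})) x \<le> 1" by blast
    then have "count p x + count p x \<le> 1" by (simp split: if_splits)
    then show "count p x = 0" by linarith
  qed
  then show ?thesis by (simp add: multiset_eq_iff)
qed

lemma ext_le_mono_c: "R \<subseteq> R' \<Longrightarrow> ext_le_c R b m \<Longrightarrow> ext_le_c R' b m"
  unfolding ext_le_c_def by blast


context
  fixes SA :: "'a set" and RA SB RB y
  assumes dA: "dendroidal_c SA RA" and dB: "dendroidal_c SB RB"
    and int: "SA \<inter> SB = {y}" and lf: "leaf_c RA y" and rt: "is_root_c SB RB y"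
begin

lemma cbpA: "bposet_c SA RA" using dA unfolding dendroidal_c_def by blast
lemma cbpB: "bposet_c SB RB" using dB unfolding dendroidal_c_def by blast
lemma cspA: "simple_c RA" using dA unfolding dendroidal_c_def by blast
lemma cspB: "simple_c RB" using dB unfolding dendroidal_c_def by blast
lemma cRA_S: "(z,x)\<in>RA \<Longrightarrow> set_mset z \<subseteq> SA \<and> x \<in> SA" using cbpA unfolding bposet_c_def by blast
lemma cRB_S: "(z,x)\<in>RB \<Longrightarrow> set_mset z \<subseteq> SB \<and> x \<in> SB" using cbpB unfolding bposet_c_def by blast
lemma creflA: "a \<in> SA \<Longrightarrow> ({#a#},a) \<in> RA" using cbpA unfolding bposet_c_def by blast
lemma creflB: "a \<in> SB \<Longrightarrow> ({#a#},a) \<in> RB" using cbpB unfolding bposet_c_def by blast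
lemma cntA: "(z,x)\<in>RA \<Longrightarrow> count z u \<le> 1" using cspA unfolding simple_c_def by blast
lemma cntB: "(z,x)\<in>RB \<Longrightarrow> count z u \<le> 1" using cspB unfolding simple_c_def by blast
lemma cyA: "y \<in> SA" using int by blast
lemma cyB: "y \<in> SB" using int by blast
lemma cleafy: "(z,y)\<in>RA \<Longrightarrow> z = {#y#}" using lf unfolding leaf_c_def hat_c_def by blast

abbreviation "H \<equiv> graft_c RA RB y"

lemma Hc: "(c,y)\<in>RB \<Longrightarrow> (a + {#y#},x)\<in>RA \<Longrightarrow> (a + c,x)\<in>H"
  unfolding graft_c_def by blast
lemma HA: "(z,x)\<in>RA \<Longrightarrow> (z,x)\<in>H" unfolding graft_c_def by blast
lemma HB: "(z,x)\<in>RB \<Longrightarrow> (z,x)\<in>H" unfolding graft_c_def by blast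

lemma H_cases: "(z,x)\<in>H \<Longrightarrow> (z,x)\<in>RA \<or> (z,x)\<in>RB \<or>
   (\<exists>a c. z = a + c \<and> (c,y)\<in>RB \<and> (a + {#y#},x)\<in>RA)"
  unfolding graft_c_def by blast

lemma noy: "(a + {#y#},x)\<in>RA \<Longrightarrow> y \<notin># a"
proof
  assume h: "(a + {#y#},x)\<in>RA" "y \<in># a"
  have "count (a + {#y#}) y \<le> 1" using cntA h(1) by blast
  moreover have "count a y \<ge> 1" using h(2) by (simp add: Suc_le_eq)
  ultimately show False by simp
qed

lemma H_SB: assumes "(z,a)\<in>H" "a\<in>SB" shows "(z,a)\<in>RB"
proof -
  have "(z,a)\<in>RA \<Longrightarrow> (z,a)\<in>RB"
  proof -
    assume h: "(z,a)\<in>RA"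
    then have "a \<in> SA" using cRA_S by blast
    then have "a = y" using int assms(2) by blast
    then have "z = {#y#}" using cleafy h by blast
    then show "(z,a)\<in>RB" using creflB[OF cyB] \<open>a = y\<close> by simp
  qed
  moreover have "\<And>a1 c. z = a1 + c \<Longrightarrow> (c,y)\<in>RB \<Longrightarrow> (a1 + {#y#},a)\<in>RA \<Longrightarrow> (z,a)\<in>RB"
  proof -
    fix a1 c assume h: "z = a1 + c" "(c,y)\<in>RB" "(a1 + {#y#},a)\<in>RA"
    then have "a \<in> SA" using cRA_S by blast
    then have "a = y" using int assms(2) by blast
    then have "a1 + {#y#} = {#y#}" using cleafy h(3) by blast
    then have "a1 = {#}" by simp
    then show "(z,a)\<in>RB" using h by (simp add: \<open>a = y\<close>)
  qed
  ultimately show "(z,a)\<in>RB" using H_cases[OF assms(1)] by blast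
qed

lemma H_SA: assumes "(z,a)\<in>H" "a\<notin>SB"
  shows "(z,a)\<in>RA \<or> (\<exists>a1 c. z = a1 + c \<and> (c,y)\<in>RB \<and> (a1 + {#y#},a)\<in>RA)"
proof -
  have "(z,a)\<notin>RB" using cRB_S assms(2) by blast
  then show ?thesis using H_cases[OF assms(1)] by blast
qed

lemma H_S: assumes "(z,x)\<in>H" shows "set_mset z \<subseteq> SA \<union> SB \<and> x \<in> SA \<union> SB"
proof -
  consider "(z,x)\<in>RA" | "(z,x)\<in>RB" | a1 c where "z = a1 + c" "(c,y)\<in>RB" "(a1 + {#y#},x)\<in>RA"
    using H_cases[OF assms] by blast
  then show ?thesis
  proof cases
    case 1 then show ?thesis using cRA_S[OF 1] by blast
  next
    case 2 then show ?thesis using cRB_S[OF 2] by blast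
  next
    case 3 then show ?thesis using cRB_S[OF 3(2)] cRA_S[OF 3(3)] by auto
  qed
qed

lemma H_cnt: assumes "(z,x)\<in>H" shows "count z u \<le> 1"
proof -
  consider "(z,x)\<in>RA" | "(z,x)\<in>RB" | a1 c where "z = a1 + c" "(c,y)\<in>RB" "(a1 + {#y#},x)\<in>RA"
    using H_cases[OF assms] by blast
  then show ?thesis
  proof cases
    case 1 then show ?thesis using cntA by blast
  next
    case 2 then show ?thesis using cntB by blast
  next
    case 3
    have c1: "count (a1 + {#y#}) u \<le> 1" using cntA 3(3) by blast
    have c2: "count c u \<le> 1" using cntB 3(2) by blast
    have ny: "y \<notin># a1" using noy 3(3) .
    show ?thesis
    proof (cases "u \<in># a1")
      case True
      then have "u \<in> SA" "u \<noteq> y" using cRA_S[OF 3(3)] ny by auto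
      then have "u \<notin> SB" using int by blast
      then have "count c u = 0" using cRB_S[OF 3(2)] by (meson count_eq_zero_iff subsetD)
      then show ?thesis using c1 3(1) by (simp split: if_splits)
    next
      case False
      then have "count a1 u = 0" by (simp add: count_eq_zero_iff)
      then show ?thesis using c2 3(1) by simp
    qed
  qed
qed

lemma H_subst: assumes h1: "(p + {#u#},x)\<in>H" and h2: "(v,u)\<in>H" shows "(p + v,x)\<in>H"
proof -
  consider "(p + {#u#},x)\<in>RB" | "(p + {#u#},x)\<in>RA"
    | a1 c where "p + {#u#} = a1 + c" "(c,y)\<in>RB" "(a1 + {#y#},x)\<in>RA"
    using H_cases[OF h1] by blast
  then show ?thesis
  proof cases
    case 1
    then have "u \<in> SB" using cRB_S[OF 1] by auto
    then have "(v,u)\<in>RB" using H_SB h2 by blast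
    then show ?thesis using bp_c_sub[OF cbpB 1] HB by blast
  next
    case 2
    then have uA: "u \<in> SA" using cRA_S[OF 2] by auto
    show ?thesis
    proof (cases "u = y")
      case True
      then have "(v,y)\<in>RB" using H_SB h2 cyB by blast
      then show ?thesis using Hc[of v p x] 2 True by simp
    next
      case False
      then have uB: "u \<notin> SB" using uA int by blast
      consider "(v,u)\<in>RA" | b1 c where "v = b1 + c" "(c,y)\<in>RB" "(b1 + {#y#},u)\<in>RA"
        using H_SA[OF h2 uB] by blast
      then show ?thesis
      proof cases
        case 1 then show ?thesis using bp_c_sub[OF cbpA 2] HA by blast
      next
        case (2 b1 c)
        have "(p + (b1 + {#y#}),x)\<in>RA" using bp_c_sub[OF cbpA \<open>(p + {#u#},x)\<in>RA\<close> 2(3)] .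
        then have "((p + b1) + {#y#},x)\<in>RA" by (simp add: add.assoc)
        from Hc[OF 2(2) this] show ?thesis using 2(1) by (simp add: add.assoc)
      qed
    qed
  next
    case (3 a1 c)
    note o = 3
    have "u \<in># a1 + c" unfolding o(1)[symmetric] by simp
    then consider "u \<in># c" | "u \<in># a1" by auto
    then show ?thesis
    proof cases
      case 1
      define c' where "c' = c - {#u#}"
      have c: "c = c' + {#u#}" using 1 by (simp add: c'_def)
      have pq: "p = a1 + c'" using o(1) c by (metis add.assoc add_right_imp_eq)
      have "u \<in> SB" using cRB_S[OF o(2)] 1 by auto
      then have "(v,u)\<in>RB" using H_SB h2 by blast
      then have "(c' + v,y)\<in>RB" using bp_c_sub[OF cbpB, of c' u y v] o(2) c by simp
      from Hc[OF this o(3)] show ?thesis using pq by (simp add: add.assoc)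
    next
      case 2
      define a' where "a' = a1 - {#u#}"
      have a: "a1 = a' + {#u#}" using 2 by (simp add: a'_def)
      have pq: "p = a' + c" using o(1) a by (metis add.commute add.left_commute add_left_imp_eq)
      have uA: "u \<in> SA" using cRA_S[OF o(3)] a by auto
      have "u \<noteq> y" using noy[OF o(3)] 2 by auto
      then have uB: "u \<notin> SB" using uA int by blast
      have e: "((a' + {#y#}) + {#u#},x)\<in>RA" using o(3) a by (simp add: ac_simps)
      consider "(v,u)\<in>RA" | b1 d where "v = b1 + d" "(d,y)\<in>RB" "(b1 + {#y#},u)\<in>RA"
        using H_SA[OF h2 uB] by blast
      then show ?thesis
      proof cases
        case 1
        have "((a' + {#y#}) + v,x)\<in>RA" using bp_c_sub[OF cbpA e 1] .
        then have "((a' + v) + {#y#},x)\<in>RA" by (simp add: ac_simps)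
        from Hc[OF o(2) this] show ?thesis using pq by (simp add: ac_simps)
      next
        case (2 b1 d)
        have "((a' + {#y#}) + (b1 + {#y#}),x)\<in>RA" using bp_c_sub[OF cbpA e 2(3)] .
        then have "count ((a' + {#y#}) + (b1 + {#y#})) y \<le> 1" using cntA by blast
        then show ?thesis by simp
      qed
    qed
  qed
qed

lemma H_trans: "(mset as, a) \<in> H \<Longrightarrow> length bss = length as \<Longrightarrow>
   (\<forall>i<length as. (bss ! i, as ! i) \<in> H) \<Longrightarrow> (sum_list bss, a) \<in> H"
  by (rule trans_from_sub_c[where R=H, OF H_subst])

lemma ccyc_A: assumes "(w1,b)\<in>RA" "a \<in># w1" "(w2,a)\<in>RA" "b \<in># w2" shows "a = b"
proof -
  define p1 where "p1 = w1 - {#a#}"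
  define p2 where "p2 = w2 - {#b#}"
  have w1: "w1 = p1 + {#a#}" using assms(2) by (simp add: p1_def)
  have w2: "w2 = p2 + {#b#}" using assms(4) by (simp add: p2_def)
  have "(p1 + w2,b)\<in>RA" using bp_c_sub[OF cbpA, of p1 a b w2] assms(1,3) w1 by simp
  then have "((p1 + p2) + {#b#},b)\<in>RA" using w2 by (simp add: add.assoc)
  then have "p1 + p2 = {#}" using simple_self_c[OF cbpA cspA] by blast
  then have "w1 = {#a#}" "w2 = {#b#}" using w1 w2 by auto
  then show ?thesis using assms(1,3) cbpA unfolding bposet_c_def by blast
qed

lemma H_in_A: assumes "({#a#},b)\<in>H" "b \<notin> SB" "a \<notin> SB" shows "\<exists>w. (w,b)\<in>RA \<and> a \<in># w"
proof -
  consider "({#a#},b)\<in>RA" | a1 c where "{#a#} = a1 + c" "(c,y)\<in>RB" "(a1 + {#y#},b)\<in>RA"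
    using H_SA[OF assms(1,2)] by blast
  then show ?thesis
  proof cases
    case 1 then show ?thesis by auto
  next
    case 2
    have "a \<in># a1 + c" unfolding 2(1)[symmetric] by simp
    moreover have "a \<notin># c" using cRB_S[OF 2(2)] assms(3) by blast
    ultimately show ?thesis using 2(3) by auto
  qed
qed

lemma H_antisym: assumes "({#a#},b)\<in>H" "({#b#},a)\<in>H" shows "a = b"
proof (cases "b \<in> SB")
  case True
  then have "({#a#},b)\<in>RB" using H_SB assms(1) by blast
  then have "a \<in> SB" using cRB_S[OF \<open>({#a#},b)\<in>RB\<close>] by auto
  then have "({#b#},a)\<in>RB" using H_SB assms(2) by blast
  then show ?thesis using \<open>({#a#},b)\<in>RB\<close> cbpB unfolding bposet_c_def by blast
next
  case False
  show ?thesis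
  proof (cases "a \<in> SB")
    case True
    then have "({#b#},a)\<in>RB" using H_SB assms(2) by blast
    then have "b \<in> SB" using cRB_S[OF \<open>({#b#},a)\<in>RB\<close>] by auto
    then show ?thesis using False by blast
  next
    case aB: False
    obtain w1 where "(w1,b)\<in>RA" "a \<in># w1" using H_in_A[OF assms(1) False aB] by blast
    moreover obtain w2 where "(w2,a)\<in>RA" "b \<in># w2" using H_in_A[OF assms(2) aB False] by blast
    ultimately show ?thesis using ccyc_A by blast
  qed
qed

lemma H_bposet: "bposet_c (SA \<union> SB) H"
  unfolding bposet_c_def
proof (intro conjI)
  show "\<forall>m a. (m, a) \<in> H \<longrightarrow> set_mset m \<subseteq> SA \<union> SB \<and> a \<in> SA \<union> SB" using H_S by blast
  show "\<forall>a\<in>SA \<union> SB. ({#a#}, a) \<in> H" using creflA creflB HA HB by blast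
  show "\<forall>as a bss. (mset as, a) \<in> H \<and> length bss = length as \<and> (\<forall>i<length as. (bss ! i, as ! i) \<in> H)
      \<longrightarrow> (sum_list bss, a) \<in> H" using H_trans by blast
  show "\<forall>a b. ({#a#}, b) \<in> H \<and> ({#b#}, a) \<in> H \<longrightarrow> a = b" using H_antisym by blast
qed

lemma H_finite: "finite H"
proof -
  have fA: "finite RA" using dA unfolding dendroidal_c_def by blast
  have fB: "finite RB" using dB unfolding dendroidal_c_def by blast
  let ?C = "(\<lambda>(cp,wx). (fst wx - {#y#} + fst cp, snd wx)) ` (RB \<times> RA)"
  have "finite ?C" using fA fB by auto
  moreover have "H \<subseteq> RA \<union> RB \<union> ?C"
  proof
    fix zx assume "zx \<in> H"
    then consider "zx \<in> RA" | "zx \<in> RB" | a1 c x where "zx = (a1 + c,x)" "(c,y)\<in>RB" "(a1 + {#y#},x)\<in>RA"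
      unfolding graft_c_def by blast
    then show "zx \<in> RA \<union> RB \<union> ?C"
    proof cases
      case 3
      have "zx = (\<lambda>(cp,wx). (fst wx - {#y#} + fst cp, snd wx)) ((c,y),(a1 + {#y#},x))"
        using 3(1) by simp
      moreover have "((c,y),(a1 + {#y#},x)) \<in> RB \<times> RA" using 3(2,3) by blast
      ultimately show ?thesis by blast
    qed auto
  qed
  moreover have "finite (RA \<union> RB \<union> ?C)" using fA fB \<open>finite ?C\<close> by blast
  ultimately show ?thesis using finite_subset by blast
qed

lemma H_root: "\<exists>r. is_root_c (SA \<union> SB) H r"
proof -
  have "\<exists>r. is_root_c SA RA r" using dA unfolding dendroidal_c_def by blast
  then obtain r where r: "is_root_c SA RA r" by blast
  have "is_root_c (SA \<union> SB) H r"
    unfolding is_root_c_def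
  proof (intro conjI ballI)
    show "r \<in> SA \<union> SB" using r unfolding is_root_c_def by blast
    fix a assume "a \<in> SA \<union> SB"
    then consider "a \<in> SA" | "a \<in> SB" by blast
    then show "descendant_c H a r"
    proof cases
      case 1
      then obtain b' where "(b',r)\<in>RA" "a \<in># b'" using r unfolding is_root_c_def descendant_c_def by blast
      then show ?thesis using HA unfolding descendant_c_def by blast
    next
      case 2
      then obtain b' where b': "(b',y)\<in>RB" "a \<in># b'" using rt unfolding is_root_c_def descendant_c_def by blast
      obtain w where w: "(w,r)\<in>RA" "y \<in># w" using r cyA unfolding is_root_c_def descendant_c_def by blast
      have "((w - {#y#}) + {#y#},r)\<in>RA" using w by simp
      then have "((w - {#y#}) + b',r)\<in>H" by (rule Hc[OF b'(1)])
      moreover have "a \<in># (w - {#y#}) + b'" using b'(2) by simp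
      ultimately show ?thesis unfolding descendant_c_def by blast
    qed
  qed
  then show ?thesis by blast
qed

lemma H_simple: "simple_c H" unfolding simple_c_def using H_cnt by blast

lemma chatB: "a \<in> SB \<Longrightarrow> hat_c H a = hat_c RB a"
  unfolding hat_c_def using H_SB HB by blast

lemma sum_list_upd: "j < length xs \<Longrightarrow>
  sum_list xs = sum_list (take j xs) + xs!j + sum_list (drop (Suc j) xs)"
  using arg_cong[OF id_take_nth_drop, of j xs sum_list] by (simp add: add.assoc)

lemma sum_list_upd2: "j < length xs \<Longrightarrow>
  sum_list (xs[j:=v]) = sum_list (take j xs) + v + sum_list (drop (Suc j) xs)"
  by (simp add: upd_conv_take_nth_drop add.assoc)

lemma H_children: assumes "a \<in> SA \<union> SB" "\<not> leaf_c H a" shows "has_children_c H a"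
proof (cases "a \<in> SB")
  case True
  then have "\<not> leaf_c RB a" using assms(2) chatB unfolding leaf_c_def by simp
  then have "has_children_c RB a" using dB True unfolding dendroidal_c_def by blast
  then obtain m where m: "m \<in> hat_c RB a" "\<forall>b\<in>hat_c RB a. ext_le_c RB b m"
    unfolding has_children_c_def by blast
  have sub: "RB \<subseteq> H" using HB by auto
  show ?thesis unfolding has_children_c_def chatB[OF True]
    using m ext_le_mono_c[OF sub] by blast
next
  case False
  then have aA: "a \<in> SA" "a \<noteq> y" using assms(1) cyB by auto
  obtain z where z: "(z,a)\<in>H" "z \<noteq> {#a#}" using assms(2) unfolding leaf_c_def hat_c_def by blast
  have "\<not> leaf_c RA a"
  proof -
    consider "(z,a)\<in>RA" | a1 c where "z = a1 + c" "(c,y)\<in>RB" "(a1 + {#y#},a)\<in>RA"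
      using H_SA[OF z(1) False] by blast
    then show ?thesis
    proof cases
      case 1 then show ?thesis using z(2) unfolding leaf_c_def hat_c_def by blast
    next
      case 2
      have "a1 + {#y#} \<noteq> {#a#}"
      proof
        assume eq: "a1 + {#y#} = {#a#}"
        have "y \<in># a1 + {#y#}" by simp
        then show False using eq aA(2) by simp
      qed
      then show ?thesis using 2(3) unfolding leaf_c_def hat_c_def by blast
    qed
  qed
  then have "has_children_c RA a" using dA aA(1) unfolding dendroidal_c_def by blast
  then obtain m where m: "m \<in> hat_c RA a" "\<forall>b\<in>hat_c RA a. ext_le_c RA b m"
    unfolding has_children_c_def by blast
  have "m \<in> hat_c H a" using m(1) HA unfolding hat_c_def by blast
  moreover have "\<forall>b\<in>hat_c H a. ext_le_c H b m"
  proof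
    fix b assume b: "b \<in> hat_c H a"
    consider "(b,a)\<in>RA" | a1 c where "b = a1 + c" "(c,y)\<in>RB" "(a1 + {#y#},a)\<in>RA"
      using H_SA[OF _ False, of b] b unfolding hat_c_def by blast
    then show "ext_le_c H b m"
    proof cases
      case 1
      then have "b \<in> hat_c RA a" using b unfolding hat_c_def by blast
      have sub: "RA \<subseteq> H" using HA by auto
      then show ?thesis using m(2) ext_le_mono_c[OF sub] \<open>b \<in> hat_c RA a\<close> by blast
    next
      case 2
      have "a1 + {#y#} \<noteq> {#a#}"
      proof
        assume eq: "a1 + {#y#} = {#a#}"
        have "y \<in># a1 + {#y#}" by simp
        then show False using eq aA(2) by simp
      qed
      then have "a1 + {#y#} \<in> hat_c RA a" using 2(3) unfolding hat_c_def by blast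
      then have "ext_le_c RA (a1 + {#y#}) m" using m(2) by blast
      then obtain bs ms where bm: "mset bs = m" "length ms = length bs" "a1 + {#y#} = sum_list ms"
          "\<forall>i<length bs. (ms ! i, bs ! i) \<in> RA"
        unfolding ext_le_c_def by blast
      have "y \<in># sum_list ms" unfolding bm(3)[symmetric] by simp
      then have "y \<in> (\<Union>x\<in>set ms. set_mset x)" by simp
      then obtain xs where xs: "xs \<in> set ms" "y \<in># xs" by blast
      then obtain j where j0: "j < length ms" "ms!j = xs" by (auto simp: in_set_conv_nth)
      then have j: "j < length ms" "y \<in># ms!j" using xs(2) by auto
      define q where "q = ms!j - {#y#}"
      have pq: "ms!j = q + {#y#}" using j(2) by (simp add: q_def)
      have "a1 + {#y#} = sum_list (take j ms) + (q + {#y#}) + sum_list (drop (Suc j) ms)"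
        using sum_list_upd[OF j(1)] bm(3) pq by simp
      then have e: "a1 = sum_list (take j ms) + q + sum_list (drop (Suc j) ms)" by simp
      define ms' where "ms' = ms[j := q + c]"
      have l': "length ms' = length bs" using bm(2) by (simp add: ms'_def)
      have c': "sum_list ms' = a1 + c"
        using sum_list_upd2[OF j(1), of "q + c"] e by (simp add: ms'_def add.assoc)
      have "\<forall>i<length bs. (ms' ! i, bs ! i) \<in> H"
      proof (intro allI impI)
        fix i assume i: "i < length bs"
        show "(ms' ! i, bs ! i) \<in> H"
        proof (cases "i = j")
          case True
          have "(ms!j, bs!j) \<in> RA" using bm(4) j(1) bm(2) by simp
          then have "(q + {#y#}, bs!j) \<in> RA" using pq by simp
          then have "(q + c, bs!j) \<in> H" by (rule Hc[OF 2(2)])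
          then show ?thesis using True j(1) by (simp add: ms'_def)
        next
          case False
          then show ?thesis using bm(4) i HA by (simp add: ms'_def)
        qed
      qed
      then show ?thesis unfolding ext_le_c_def 2(1)
        by (intro exI[of _ bs] exI[of _ ms'] conjI bm(1) l' c'[symmetric]) (simp add: l')
    qed
  qed
  ultimately show ?thesis unfolding has_children_c_def by blast
qed

lemma H_dendroidal: "dendroidal_c (SA \<union> SB) H"
  unfolding dendroidal_c_def
  by (intro conjI H_bposet H_finite H_simple H_root ballI impI H_children)

lemma H_univ:
  assumes dC: "dendroidal_c SC RC" and mf: "mono_c SA RA SC RC f" and mg: "mono_c SB RB SC RC g"
    and fg: "f y = g y"
  shows "\<exists>h. mono_c (SA \<union> SB) H SC RC h
                  \<and> (\<forall>a\<in>SA. h a = f a) \<and> (\<forall>b\<in>SB. h b = g b)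
                  \<and> (\<forall>h'. mono_c (SA \<union> SB) H SC RC h'
                          \<and> (\<forall>a\<in>SA. h' a = f a) \<and> (\<forall>b\<in>SB. h' b = g b)
                          \<longrightarrow> (\<forall>x\<in>SA \<union> SB. h' x = h x))"
proof -
  define h where "h = (\<lambda>x. if x \<in> SA then f x else g x)"
  have hA: "\<forall>a\<in>SA. h a = f a" by (simp add: h_def)
  have hB: "\<forall>b\<in>SB. h b = g b" using int fg by (auto simp: h_def)
  have bpC: "bposet_c SC RC" using dC unfolding dendroidal_c_def by blast
  have "mono_c (SA \<union> SB) H SC RC h"
    unfolding mono_c_def
  proof (intro conjI allI impI ballI)
    fix a assume "a \<in> SA \<union> SB" then show "h a \<in> SC" using mf mg hA hB unfolding mono_c_def by auto
  next
    fix bs a assume "(bs,a)\<in>H"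
    then consider "(bs,a)\<in>RA" | "(bs,a)\<in>RB" | a1 c where "bs = a1 + c" "(c,y)\<in>RB" "(a1 + {#y#},a)\<in>RA"
      using H_cases by blast
    then show "(image_mset h bs, h a) \<in> RC"
    proof cases
      case 1
      have e: "image_mset h bs = image_mset f bs" "h a = f a" using cRA_S[OF 1] hA
        by (auto intro!: image_mset_cong)
      have "(image_mset f bs, f a) \<in> RC" using mf 1 unfolding mono_c_def by blast
      then show ?thesis by (simp only: e)
    next
      case 2
      have e: "image_mset h bs = image_mset g bs" "h a = g a" using cRB_S[OF 2] hB
        by (auto intro!: image_mset_cong)
      have "(image_mset g bs, g a) \<in> RC" using mg 2 unfolding mono_c_def by blast
      then show ?thesis by (simp only: e)
    next
      case 3
      have e1: "image_mset h a1 = image_mset f a1" "h a = f a" using cRA_S[OF 3(3)] hA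
        by (auto intro!: image_mset_cong)
      have e2: "image_mset h c = image_mset g c" using cRB_S[OF 3(2)] hB
        by (auto intro!: image_mset_cong)
      have "(image_mset f (a1 + {#y#}), f a) \<in> RC" using mf 3(3) unfolding mono_c_def by blast
      then have r1: "(image_mset f a1 + {#f y#}, f a) \<in> RC" by simp
      have r2: "(image_mset g c, f y) \<in> RC" using mg 3(2) fg unfolding mono_c_def by fastforce
      have "(image_mset f a1 + image_mset g c, f a) \<in> RC" using bp_c_sub[OF bpC r1 r2] .
      then show ?thesis unfolding 3(1) image_mset_union e1 e2 .
    qed
  qed
  moreover have "\<forall>h'. mono_c (SA \<union> SB) H SC RC h'
                          \<and> (\<forall>a\<in>SA. h' a = f a) \<and> (\<forall>b\<in>SB. h' b = g b)
                          \<longrightarrow> (\<forall>x\<in>SA \<union> SB. h' x = h x)" using hA hB by auto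
  ultimately show ?thesis using hA hB by blast
qed

lemma cmono_idA: "mono_c SA RA (SA \<union> SB) H id" unfolding mono_c_def using HA cyA by auto
lemma cmono_idB: "mono_c SB RB (SA \<union> SB) H id" unfolding mono_c_def using HB by auto

end


lemma part_c:
  "(\<forall>(SA :: 'a set) RA SB RB y.
      dendroidal_c SA RA \<and> dendroidal_c SB RB \<and> SA \<inter> SB = {y}
      \<and> leaf_c RA y \<and> is_root_c SB RB y \<longrightarrow>
        dendroidal_c (SA \<union> SB) (graft_c RA RB y)
      \<and> mono_c SA RA (SA \<union> SB) (graft_c RA RB y) id
      \<and> mono_c SB RB (SA \<union> SB) (graft_c RA RB y) id
      \<and> (\<forall>(SC :: 'c set) RC f g.
           dendroidal_c SC RC \<and> mono_c SA RA SC RC f \<and> mono_c SB RB SC RC g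
           \<and> f y = g y \<longrightarrow>
             (\<exists>h. mono_c (SA \<union> SB) (graft_c RA RB y) SC RC h
                  \<and> (\<forall>a\<in>SA. h a = f a) \<and> (\<forall>b\<in>SB. h b = g b)
                  \<and> (\<forall>h'. mono_c (SA \<union> SB) (graft_c RA RB y) SC RC h'
                          \<and> (\<forall>a\<in>SA. h' a = f a) \<and> (\<forall>b\<in>SB. h' b = g b)
                          \<longrightarrow> (\<forall>x\<in>SA \<union> SB. h' x = h x)))))"
proof (intro allI impI)
  fix SA :: "'a set" and RA SB RB y
  assume h: "dendroidal_c SA RA \<and> dendroidal_c SB RB \<and> SA \<inter> SB = {y}
      \<and> leaf_c RA y \<and> is_root_c SB RB y"
  then have h1: "dendroidal_c SA RA" "dendroidal_c SB RB" "SA \<inter> SB = {y}"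
      "leaf_c RA y" "is_root_c SB RB y" by auto
  show "dendroidal_c (SA \<union> SB) (graft_c RA RB y)
      \<and> mono_c SA RA (SA \<union> SB) (graft_c RA RB y) id
      \<and> mono_c SB RB (SA \<union> SB) (graft_c RA RB y) id
      \<and> (\<forall>(SC :: 'c set) RC f g.
           dendroidal_c SC RC \<and> mono_c SA RA SC RC f \<and> mono_c SB RB SC RC g
           \<and> f y = g y \<longrightarrow>
             (\<exists>h. mono_c (SA \<union> SB) (graft_c RA RB y) SC RC h
                  \<and> (\<forall>a\<in>SA. h a = f a) \<and> (\<forall>b\<in>SB. h b = g b)
                  \<and> (\<forall>h'. mono_c (SA \<union> SB) (graft_c RA RB y) SC RC h'
                          \<and> (\<forall>a\<in>SA. h' a = f a) \<and> (\<forall>b\<in>SB. h' b = g b)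
                          \<longrightarrow> (\<forall>x\<in>SA \<union> SB. h' x = h x))))"
  proof (intro conjI allI impI)
    show "dendroidal_c (SA \<union> SB) (graft_c RA RB y)" by (rule H_dendroidal[OF h1])
    show "mono_c SA RA (SA \<union> SB) (graft_c RA RB y) id" by (rule cmono_idA[OF h1])
    show "mono_c SB RB (SA \<union> SB) (graft_c RA RB y) id" by (rule cmono_idB[OF h1])
    fix SC :: "'c set" and RC f g
    assume "dendroidal_c SC RC \<and> mono_c SA RA SC RC f \<and> mono_c SB RB SC RC g \<and> f y = g y"
    then show "\<exists>h. mono_c (SA \<union> SB) (graft_c RA RB y) SC RC h
                  \<and> (\<forall>a\<in>SA. h a = f a) \<and> (\<forall>b\<in>SB. h b = g b)
                  \<and> (\<forall>h'. mono_c (SA \<union> SB) (graft_c RA RB y) SC RC h'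
                          \<and> (\<forall>a\<in>SA. h' a = f a) \<and> (\<forall>b\<in>SB. h' b = g b)
                          \<longrightarrow> (\<forall>x\<in>SA \<union> SB. h' x = h x))"
      using H_univ[OF h1] by blast
  qed
qed


theorem corollary5p1:
  shows
  "(\<forall>(SA :: 'a set) RA SB RB y.
      dendroidal_nc SA RA \<and> dendroidal_nc SB RB \<and> SA \<inter> SB = {y}
      \<and> leaf_nc RA y \<and> is_root_nc SB RB y \<longrightarrow>
        dendroidal_nc (SA \<union> SB) (graft_nc RA RB y)
      \<and> mono_nc SA RA (SA \<union> SB) (graft_nc RA RB y) id
      \<and> mono_nc SB RB (SA \<union> SB) (graft_nc RA RB y) id
      \<and> (\<forall>(SC :: 'c set) RC f g.
           dendroidal_nc SC RC \<and> mono_nc SA RA SC RC f \<and> mono_nc SB RB SC RC g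
           \<and> f y = g y \<longrightarrow>
             (\<exists>h. mono_nc (SA \<union> SB) (graft_nc RA RB y) SC RC h
                  \<and> (\<forall>a\<in>SA. h a = f a) \<and> (\<forall>b\<in>SB. h b = g b)
                  \<and> (\<forall>h'. mono_nc (SA \<union> SB) (graft_nc RA RB y) SC RC h'
                          \<and> (\<forall>a\<in>SA. h' a = f a) \<and> (\<forall>b\<in>SB. h' b = g b)
                          \<longrightarrow> (\<forall>x\<in>SA \<union> SB. h' x = h x)))))
 \<and> (\<forall>(SA :: 'a set) RA SB RB y.
      dendroidal_c SA RA \<and> dendroidal_c SB RB \<and> SA \<inter> SB = {y}
      \<and> leaf_c RA y \<and> is_root_c SB RB y \<longrightarrow>
        dendroidal_c (SA \<union> SB) (graft_c RA RB y)
      \<and> mono_c SA RA (SA \<union> SB) (graft_c RA RB y) id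
      \<and> mono_c SB RB (SA \<union> SB) (graft_c RA RB y) id
      \<and> (\<forall>(SC :: 'c set) RC f g.
           dendroidal_c SC RC \<and> mono_c SA RA SC RC f \<and> mono_c SB RB SC RC g
           \<and> f y = g y \<longrightarrow>
             (\<exists>h. mono_c (SA \<union> SB) (graft_c RA RB y) SC RC h
                  \<and> (\<forall>a\<in>SA. h a = f a) \<and> (\<forall>b\<in>SB. h b = g b)
                  \<and> (\<forall>h'. mono_c (SA \<union> SB) (graft_c RA RB y) SC RC h'
                          \<and> (\<forall>a\<in>SA. h' a = f a) \<and> (\<forall>b\<in>SB. h' b = g b)
                          \<longrightarrow> (\<forall>x\<in>SA \<union> SB. h' x = h x)))))"
    by (rule conjI[OF part_nc part_c])

end
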